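(* Let $G$ be a topological group and $H$ a normal, closed, discrete subgroup of $G$, acting on $G$ on the right by $(g,h)\mapsto g\cdot h$. Let $U$ be an open symmetric neighborhood of $1_G$ (i.e. $U=U^{-1}$) such that $U^4\cap H=\{1_G\}$, where $U^4=U\cdot U\cdot U\cdot U$. Then the family $\{U\cdot g\}_{g\in G}$ is an overlay structure of this action of $H$ on $G$.
   Context: For a continuous map $p:X\to Y$: a slice of $p$ is an open set $U\subseteq X$ such that $p^{-1}(p(U))$ is the disjoint union of a family of open sets $U_s$ ($s\in S$), each mapped by $p$ homeomorphically onto $p(U)$, with $U=U_t$ for some $t\in S$. A covering structure of $p$ is an open cover $\mathcal S$ of $X$ by slices of $p$ such that for every $U\in\mathcal S$, $p^{-1}(p(U))$ is the disjoint union of a family $\{U_j\}_{j\in J}$ of elements of $\mathcal S$, each mapped homeomorphically onto $p(U)$. For a cover $\mathcal S$ and $x\in X$, $st(x,\mathcal S)=\bigcup\{U\in\mathcal S: x\in U\}$. For a free action of a group $H$ on $X$: a slice of the action is an open $U\subseteq X$ with $U\cap(h\cdot U)\neq\emptyset\Rightarrow h=1_H$. An overlay structure of the action is a covering structure $\mathcal U$ of the projection $X\to X/H$ (orbit space with quotient topology) such that $st(x,\mathcal U)$ is a slice of the action for every $x\in X$. *)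

theory Defs
  imports "HOL-Analysis.Analysis"
begin

definition slice :: "'a topology \<Rightarrow> 'b topology \<Rightarrow> ('a \<Rightarrow> 'b) \<Rightarrow> 'a set \<Rightarrow> bool" where
  "slice X Y p U \<longleftrightarrow> openin X U \<and>
     (\<exists>S. U \<in> S \<and> pairwise disjnt S \<and>
          \<Union>S = {x \<in> topspace X. p x \<in> p ` U} \<and>
          (\<forall>V\<in>S. openin X V \<and> homeomorphic_map (subtopology X V) (subtopology Y (p ` U)) p))"

definition covering_structure :: "'a topology \<Rightarrow> 'b topology \<Rightarrow> ('a \<Rightarrow> 'b) \<Rightarrow> 'a set set \<Rightarrow> bool" where
  "covering_structure X Y p \<S> \<longleftrightarrow>
     (\<forall>U\<in>\<S>. slice X Y p U) \<and> \<Union>\<S> = topspace X \<and>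
     (\<forall>U\<in>\<S>. \<exists>\<J>. \<J> \<subseteq> \<S> \<and> pairwise disjnt \<J> \<and>
          \<Union>\<J> = {x \<in> topspace X. p x \<in> p ` U} \<and>
          (\<forall>V\<in>\<J>. homeomorphic_map (subtopology X V) (subtopology Y (p ` U)) p))"

definition star :: "'a \<Rightarrow> 'a set set \<Rightarrow> 'a set" where
  "star x \<S> = \<Union>{U \<in> \<S>. x \<in> U}"

text \<open>Groups are written additively (type class topological_group_add, not necessarily
commutative); the right action of h on g is g + h.\<close>

definition orbit_proj :: "'a::group_add set \<Rightarrow> 'a \<Rightarrow> 'a set" where
  "orbit_proj H x = (\<lambda>h. x + h) ` H"

definition orbit_space :: "'a::topological_group_add set \<Rightarrow> 'a set topology" where
  "orbit_space H = topology (\<lambda>V. V \<subseteq> range (orbit_proj H) \<and> open (orbit_proj H -` V))"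

lemma istopology_orbit_space:
  "istopology (\<lambda>V. V \<subseteq> range (orbit_proj H) \<and> open (orbit_proj H -` V))"
  unfolding istopology_def by (auto simp: vimage_Union)

definition action_slice :: "'a::topological_group_add set \<Rightarrow> 'a set \<Rightarrow> bool" where
  "action_slice H U \<longleftrightarrow> open U \<and> (\<forall>h\<in>H. U \<inter> (\<lambda>x. x + h) ` U \<noteq> {} \<longrightarrow> h = 0)"

definition overlay_structure :: "'a::topological_group_add set \<Rightarrow> 'a set set \<Rightarrow> bool" where
  "overlay_structure H \<U> \<longleftrightarrow>
     covering_structure euclidean (orbit_space H) (orbit_proj H) \<U> \<and>
     (\<forall>x. action_slice H (star x \<U>))"

definition normal_subgroup :: "'a::group_add set \<Rightarrow> bool" where
  "normal_subgroup H \<longleftrightarrow> 0 \<in> H \<and> (\<forall>a\<in>H. \<forall>b\<in>H. a + b \<in> H) \<and> (\<forall>a\<in>H. - a \<in> H) \<and>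
     (\<forall>g. \<forall>h\<in>H. g + h - g \<in> H)"

end

theory Submission
  imports Defs
begin

lemma open_transl:
  fixes W :: "'a::topological_group_add set"
  assumes "open W" shows "open ((\<lambda>x. x + h) ` W)"
proof -
  have "(\<lambda>x. x + h) ` W = (\<lambda>x. x + - h) -` W"
    by (auto simp: image_iff add.assoc intro!: bexI[where x="_ + - h"])
  moreover have "open ((\<lambda>x. x + - h) -` W)"
    by (rule open_vimage[OF assms]) (intro continuous_intros)
  ultimately show ?thesis by simp
qed

lemma orbit_eq:
  assumes "normal_subgroup H"
  shows "orbit_proj H x = orbit_proj H y \<longleftrightarrow> (\<exists>h\<in>H. x = y + h)"
proof
  assume "orbit_proj H x = orbit_proj H y"
  moreover have "x \<in> orbit_proj H x" using assms unfolding orbit_proj_def normal_subgroup_def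
    by (auto simp: image_iff intro!: bexI[where x=0])
  ultimately show "\<exists>h\<in>H. x = y + h" unfolding orbit_proj_def by auto
next
  assume "\<exists>h\<in>H. x = y + h"
  then obtain h where h: "h \<in> H" "x = y + h" by auto
  show "orbit_proj H x = orbit_proj H y"
    unfolding orbit_proj_def h(2)
  proof (intro set_eqI iffI)
    fix z assume "z \<in> (\<lambda>k. y + h + k) ` H"
    then obtain k where "k \<in> H" "z = y + h + k" by auto
    then show "z \<in> (\<lambda>k. y + k) ` H" using h(1) assms unfolding normal_subgroup_def
      by (auto simp: image_iff add.assoc)
  next
    fix z assume "z \<in> (\<lambda>k. y + k) ` H"
    then obtain k where k: "k \<in> H" "z = y + k" by auto
    have "-h + k \<in> H" using h(1) k(1) assms unfolding normal_subgroup_def by auto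
    moreover have "z = y + h + (-h + k)" using k(2) by (simp add: add.assoc)
    ultimately show "z \<in> (\<lambda>k. y + h + k) ` H" by auto
  qed
qed

lemma openin_orbit:
  "openin (orbit_space H) V \<longleftrightarrow> V \<subseteq> range (orbit_proj H) \<and> open (orbit_proj H -` V)"
  unfolding orbit_space_def by (simp add: topology_inverse'[OF istopology_orbit_space])

lemma topspace_orbit: "topspace (orbit_space H) = range (orbit_proj H)"
proof (rule subset_antisym)
  show "topspace (orbit_space H) \<subseteq> range (orbit_proj H)"
    using openin_orbit[of H "topspace (orbit_space H)"] by simp
  have "openin (orbit_space H) (range (orbit_proj H))" by (simp add: openin_orbit vimage_def)
  then show "range (orbit_proj H) \<subseteq> topspace (orbit_space H)" by (rule openin_subset)
qed

lemma orbit_open_map: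
  assumes "normal_subgroup H"
  shows "open_map euclidean (orbit_space H) (orbit_proj H)"
  unfolding open_map_def
proof (intro allI impI)
  fix W :: "'a set" assume "openin euclidean W"
  hence W: "open W" by simp
  have "orbit_proj H -` (orbit_proj H ` W) = (\<Union>h\<in>H. (\<lambda>x. x + h) ` W)"
  proof (intro set_eqI iffI)
    fix x assume "x \<in> orbit_proj H -` (orbit_proj H ` W)"
    then obtain w where w: "w \<in> W" "orbit_proj H x = orbit_proj H w" by auto
    then obtain h where "h \<in> H" "x = w + h" using orbit_eq[OF assms] by blast
    then show "x \<in> (\<Union>h\<in>H. (\<lambda>x. x + h) ` W)" using w by auto
  next
    fix x assume "x \<in> (\<Union>h\<in>H. (\<lambda>x. x + h) ` W)"
    then obtain h w where "h \<in> H" "w \<in> W" "x = w + h" by auto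
    then have "orbit_proj H x = orbit_proj H w" using orbit_eq[OF assms] by blast
    then show "x \<in> orbit_proj H -` (orbit_proj H ` W)" using \<open>w \<in> W\<close> by auto
  qed
  moreover have "open (\<Union>h\<in>H. (\<lambda>x. x + h) ` W)" using open_transl[OF W] by auto
  ultimately show "openin (orbit_space H) (orbit_proj H ` W)"
    unfolding openin_orbit by auto
qed

lemma orbit_cont: "continuous_map euclidean (orbit_space H) (orbit_proj H)"
  unfolding continuous_map_def topspace_orbit openin_orbit by (auto simp: vimage_def)

theorem proposition3p5:
  fixes H U :: "'a::topological_group_add set"
  assumes "normal_subgroup H"
    and "closed H"
    and "subtopology euclidean H = discrete_topology H"
    and "open U" and "0 \<in> U" and "uminus ` U = U"
    and "{a + b + c + d | a b c d. a \<in> U \<and> b \<in> U \<and> c \<in> U \<and> d \<in> U} \<inter> H = {0}"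
  shows "overlay_structure H (range (\<lambda>g. (\<lambda>u. u + g) ` U))"
proof -
  let ?p = "orbit_proj H"
  define T where "T g = (\<lambda>u. u + g) ` U" for g :: 'a
  have NH: "0 \<in> H" "\<And>a b. a \<in> H \<Longrightarrow> b \<in> H \<Longrightarrow> a + b \<in> H" "\<And>a. a \<in> H \<Longrightarrow> - a \<in> H"
    "\<And>g h. h \<in> H \<Longrightarrow> g + h - g \<in> H"
    using assms(1) unfolding normal_subgroup_def by auto
  have negU: "- u \<in> U" if "u \<in> U" for u
    using assms(6) that by blast
  have K: "h = 0 \<and> u1 + - u1' = u2 + - u2'"
    if "u1 \<in> U" "u1' \<in> U" "u2 \<in> U" "u2' \<in> U" "h \<in> H"
       "u1 + - u1' + x = u2 + - u2' + x + h" for u1 u1' u2 u2' h x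
  proof -
    define c where "c = x + h - x"
    have cH: "c \<in> H" unfolding c_def using NH(4) that(5) .
    have "u1 + - u1' = (u1 + - u1' + x) + - x" by (simp add: add.assoc)
    also have "\<dots> = (u2 + - u2' + x + h) + - x" using that(6) by simp
    also have "\<dots> = u2 + - u2' + c" by (metis c_def add.assoc diff_conv_add_uminus)
    finally have e: "u1 + - u1' = u2 + - u2' + c" .
    have "c = - (u2 + - u2') + (u1 + - u1')" unfolding e by (rule minus_add_cancel[symmetric])
    also have "\<dots> = u2' + - u2 + u1 + - u1'" by (simp only: minus_add minus_minus add.assoc)
    finally have c4: "c = u2' + - u2 + u1 + - u1'" .
    have "c \<in> {a + b + c + d | a b c d. a \<in> U \<and> b \<in> U \<and> c \<in> U \<and> d \<in> U}"
      unfolding c4 using that negU by blast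
    with cH assms(7) have c0: "c = 0" by blast
    then have "x + h = x" unfolding c_def by (metis diff_eq_eq add_0)
    then have "h = 0" by (metis add_left_imp_eq add.right_neutral)
    with e c0 show ?thesis by simp
  qed
  have K2: "h = 0 \<and> u1 = u2"
    if "u1 \<in> U" "u2 \<in> U" "h \<in> H" "u1 + x = u2 + x + h" for u1 u2 h x
    using K[of u1 0 u2 0 h x] that assms(5) by simp
  have preim: "{x \<in> topspace euclidean. ?p x \<in> ?p ` T g} = \<Union>((\<lambda>h. T (g + h)) ` H)" for g
  proof (intro set_eqI iffI)
    fix x assume "x \<in> {x \<in> topspace euclidean. ?p x \<in> ?p ` T g}"
    then obtain u where u: "u \<in> U" "?p x = ?p (u + g)" unfolding T_def by auto
    then obtain h where "h \<in> H" "x = u + g + h" using orbit_eq[OF assms(1)] by blast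
    then show "x \<in> \<Union>((\<lambda>h. T (g + h)) ` H)" using u unfolding T_def by (auto simp: add.assoc)
  next
    fix x assume "x \<in> \<Union>((\<lambda>h. T (g + h)) ` H)"
    then obtain h u where hu: "h \<in> H" "u \<in> U" "x = u + g + h" unfolding T_def by (auto simp: add.assoc)
    then have "?p x = ?p (u + g)" using orbit_eq[OF assms(1)] by blast
    then show "x \<in> {x \<in> topspace euclidean. ?p x \<in> ?p ` T g}" using hu unfolding T_def by auto
  qed
  have disj: "pairwise disjnt ((\<lambda>h. T (g + h)) ` H)" for g
    unfolding pairwise_def disjnt_def
  proof (intro ballI impI)
    fix A B assume A: "A \<in> (\<lambda>h. T (g + h)) ` H" and B: "B \<in> (\<lambda>h. T (g + h)) ` H" and "A \<noteq> B"
    then obtain h1 h2 where h: "h1 \<in> H" "h2 \<in> H" "A = T (g + h1)" "B = T (g + h2)" by auto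
    show "A \<inter> B = {}"
    proof (rule ccontr)
      assume "A \<inter> B \<noteq> {}"
      then obtain u1 u2 where u: "u1 \<in> U" "u2 \<in> U" "u1 + (g + h1) = u2 + (g + h2)"
        unfolding h T_def by auto
      have "u1 + g = u1 + (g + h1) + - h1" by (simp only: add.assoc add.right_inverse add.right_neutral)
      also have "\<dots> = u2 + (g + h2) + - h1" using u(3) by (rule arg_cong)
      also have "\<dots> = u2 + g + (h2 + - h1)" by (simp only: add.assoc)
      finally have "u1 + g = u2 + g + (h2 + - h1)" .
      moreover have "h2 + - h1 \<in> H" using h(1,2) NH(2,3) by blast
      ultimately have "h2 + - h1 = 0" using K2 u by blast
      then have "h2 = h1" by (metis add_right_imp_eq add.left_neutral add.left_inverse add.assoc)
      then show False using \<open>A \<noteq> B\<close> h by simp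
    qed
  qed
  have pT: "?p ` T (g + h) = ?p ` T g" if "h \<in> H" for g h
  proof -
    have "?p (u + (g + h)) = ?p (u + g)" for u
      using orbit_eq[OF assms(1)] that by (metis add.assoc)
    then show ?thesis unfolding T_def image_image by simp
  qed
  have openT: "open (T g)" for g unfolding T_def by (rule open_transl[OF assms(4)])
  have homeo: "homeomorphic_map (subtopology euclidean (T (g + h))) (subtopology (orbit_space H) (?p ` T g)) ?p"
    if "h \<in> H" for g h
  proof (rule bijective_open_imp_homeomorphic_map)
    show "continuous_map (subtopology euclidean (T (g + h))) (subtopology (orbit_space H) (?p ` T g)) ?p"
    proof (rule continuous_map_into_subtopology[OF continuous_map_from_subtopology[OF orbit_cont]])
      show "?p \<in> topspace (subtopology euclidean (T (g + h))) \<rightarrow> ?p ` T g"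
        using pT[OF that, of g] by auto
    qed
    show "open_map (subtopology euclidean (T (g + h))) (subtopology (orbit_space H) (?p ` T g)) ?p"
    proof (rule open_map_into_subtopology[OF open_map_from_subtopology[OF orbit_open_map[OF assms(1)]]])
      show "openin euclidean (T (g + h))" using openT by simp
      show "?p \<in> topspace (subtopology euclidean (T (g + h))) \<rightarrow> ?p ` T g"
        using pT[OF that, of g] by auto
    qed
    show "?p ` topspace (subtopology euclidean (T (g + h))) = topspace (subtopology (orbit_space H) (?p ` T g))"
      using pT[OF that] by (auto simp: topspace_orbit)
    show "inj_on ?p (topspace (subtopology euclidean (T (g + h))))"
    proof (rule inj_onI)
      fix x y assume "x \<in> topspace (subtopology euclidean (T (g + h)))" "y \<in> topspace (subtopology euclidean (T (g + h)))"
        and e: "?p x = ?p y"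
      then obtain u1 u2 where u: "u1 \<in> U" "u2 \<in> U" "x = u1 + (g + h)" "y = u2 + (g + h)"
        unfolding T_def by auto
      then obtain k where "k \<in> H" "u1 + (g + h) = u2 + (g + h) + k" using e orbit_eq[OF assms(1)] by blast
      then have "u1 = u2" using K2 u by blast
      then show "x = y" using u by simp
    qed
  qed
  have range_eq: "range (\<lambda>g. (\<lambda>u. u + g) ` U) = range T" unfolding T_def by simp
  have fam_sub: "(\<lambda>h. T (g + h)) ` H \<subseteq> range T" for g by auto
  have g_in: "g \<in> T g" for g unfolding T_def using assms(5) by force
  have cov: "covering_structure euclidean (orbit_space H) ?p (range T)"
    unfolding covering_structure_def
  proof (intro conjI ballI)
    fix V assume "V \<in> range T"
    then obtain g where g: "V = T g" by auto
    show "slice euclidean (orbit_space H) ?p V"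
      unfolding slice_def g
    proof (intro conjI exI[where x="(\<lambda>h. T (g + h)) ` H"])
      show "openin euclidean (T g)" using openT by simp
      have "T (g + 0) \<in> (\<lambda>h. T (g + h)) ` H" using NH(1) by blast
      then show "T g \<in> (\<lambda>h. T (g + h)) ` H" by simp
      show "pairwise disjnt ((\<lambda>h. T (g + h)) ` H)" by (rule disj)
      show "\<Union>((\<lambda>h. T (g + h)) ` H) = {x \<in> topspace euclidean. ?p x \<in> ?p ` T g}" using preim by simp
      show "\<forall>V\<in>(\<lambda>h. T (g + h)) ` H. openin euclidean V \<and>
          homeomorphic_map (subtopology euclidean V) (subtopology (orbit_space H) (?p ` T g)) ?p"
        using homeo openT by auto
    qed
    show "\<exists>\<J>\<subseteq>range T. pairwise disjnt \<J> \<and> \<Union>\<J> = {x \<in> topspace euclidean. ?p x \<in> ?p ` V} \<and>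
          (\<forall>W\<in>\<J>. homeomorphic_map (subtopology euclidean W) (subtopology (orbit_space H) (?p ` V)) ?p)"
      unfolding g using fam_sub disj preim homeo by (intro exI[where x="(\<lambda>h. T (g + h)) ` H"]) auto
  next
    show "\<Union>(range T) = topspace euclidean" using g_in by auto
  qed
  have slc: "action_slice H (star x (range T))" for x
    unfolding action_slice_def
  proof (intro conjI ballI impI)
    show "open (star x (range T))" unfolding star_def using openT by auto
    fix h assume h: "h \<in> H" and ne: "star x (range T) \<inter> (\<lambda>z. z + h) ` star x (range T) \<noteq> {}"
    then obtain z w where zw: "z \<in> star x (range T)" "w \<in> star x (range T)" "z = w + h" by auto
    obtain g1 where g1: "z \<in> T g1" "x \<in> T g1" using zw(1) unfolding star_def by auto
    obtain g2 where g2: "w \<in> T g2" "x \<in> T g2" using zw(2) unfolding star_def by auto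
    obtain u1 u1' where a: "u1 \<in> U" "u1' \<in> U" "z = u1 + g1" "x = u1' + g1" using g1 unfolding T_def by auto
    obtain u2 u2' where b: "u2 \<in> U" "u2' \<in> U" "w = u2 + g2" "x = u2' + g2" using g2 unfolding T_def by auto
    have "g1 = - u1' + x" using a(4) by (simp add: add.assoc[symmetric])
    have "g2 = - u2' + x" using b(4) by (simp add: add.assoc[symmetric])
    have e1: "u1 + - u1' + x = z" unfolding a(3) \<open>g1 = - u1' + x\<close> by (simp only: add.assoc)
    have e2: "u2 + - u2' + x + h = w + h" unfolding b(3) \<open>g2 = - u2' + x\<close> by (simp only: add.assoc)
    have "u1 + - u1' + x = u2 + - u2' + x + h" unfolding e1 e2 by (rule zw(3))
    then show "h = 0" using K a b h by blast
  qed
  show ?thesis unfolding overlay_structure_def range_eq using cov slc by blast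
qed

end
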